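(* Every consistent piece-wise quadratic function is semi-consistent.
   Context: A continuous $g$ is piece-wise quadratic with $N$ pieces if there exist breakpoints $-\infty=\tau_0<\tau_1<\dots<\tau_N=+\infty$ and quadratic $p_1,\dots,p_N$ with $g=p_k$ on $[\tau_{k-1},\tau_k]$ and $p_k\ne p_{k+1}$ as functions; it is consistent if every $p_k$ is strongly convex and $g=\min_kp_k$ on $\mathbb{R}$. For piece-wise quadratic $h$ with strongly convex pieces and breakpoints $\tau_k$, the indexing function is $I_h(\beta)=\min\{k:\ \exists\,\alpha^\star\in\arg\max_\alpha\{\beta\alpha-h(\alpha)\}\text{ with }\tau_{k-1}\le\alpha^\star\le\tau_k\}$. A piece-wise quadratic $g$ with breakpoints $\tau_0,\dots,\tau_N$ and pieces $p_1,\dots,p_N$ is semi-consistent if: (i) $p_1,\dots,p_N$ are strongly convex; (ii) $p_k(\alpha)\le\min\{p_{k-1}(\alpha),p_{k+1}(\alpha)\}$ for all $\alpha\in[\tau_{k-1},\tau_k]$ and $2\le k\le N-1$; (iii) for every $k\le N$, the indexing function $I_{g_k}$ is non-decreasing, where $g_k(\alpha)=g(\alpha)$ for $\alpha\le\tau_k$ and $g_k(\alpha)=p_k(\alpha)$ for $\alpha>\tau_k$ (so $g_k$ has pieces $p_1,\dots,p_k$ and breakpoints $\tau_0,\dots,\tau_{k-1},+\infty$). *)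

theory Defs
  imports "HOL-Analysis.Analysis"
begin

definition quadratic :: "(real \<Rightarrow> real) \<Rightarrow> bool" where
  "quadratic f \<longleftrightarrow> (\<exists>a b c. \<forall>x. f x = a * x^2 + b * x + c)"

definition strongly_convex :: "(real \<Rightarrow> real) \<Rightarrow> bool" where
  "strongly_convex f \<longleftrightarrow> (\<exists>\<mu>>0. convex_on UNIV (\<lambda>x. f x - \<mu> / 2 * x^2))"

text \<open>Breakpoints: tau_0 = -infinity and tau_N = +infinity are implicit; the finite
  breakpoints are tau 1 < ... < tau (N-1).\<close>
definition in_piece :: "nat \<Rightarrow> (nat \<Rightarrow> real) \<Rightarrow> nat \<Rightarrow> real \<Rightarrow> bool" where
  "in_piece N \<tau> k \<alpha> \<longleftrightarrow> (k = 1 \<or> \<tau> (k - 1) \<le> \<alpha>) \<and> (k = N \<or> \<alpha> \<le> \<tau> k)"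

definition piecewise_quadratic ::
  "(real \<Rightarrow> real) \<Rightarrow> nat \<Rightarrow> (nat \<Rightarrow> real) \<Rightarrow> (nat \<Rightarrow> real \<Rightarrow> real) \<Rightarrow> bool" where
  "piecewise_quadratic g N \<tau> p \<longleftrightarrow>
     N \<ge> 1 \<and> continuous_on UNIV g \<and>
     (\<forall>k. 1 \<le> k \<and> k + 1 \<le> N - 1 \<longrightarrow> \<tau> k < \<tau> (k + 1)) \<and>
     (\<forall>k\<in>{1..N}. quadratic (p k)) \<and>
     (\<forall>k\<in>{1..N}. \<forall>\<alpha>. in_piece N \<tau> k \<alpha> \<longrightarrow> g \<alpha> = p k \<alpha>) \<and>
     (\<forall>k. 1 \<le> k \<and> k < N \<longrightarrow> p k \<noteq> p (k + 1))"

definition consistent ::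
  "(real \<Rightarrow> real) \<Rightarrow> nat \<Rightarrow> (nat \<Rightarrow> real) \<Rightarrow> (nat \<Rightarrow> real \<Rightarrow> real) \<Rightarrow> bool" where
  "consistent g N \<tau> p \<longleftrightarrow>
     piecewise_quadratic g N \<tau> p \<and>
     (\<forall>k\<in>{1..N}. strongly_convex (p k)) \<and>
     (\<forall>\<alpha>. g \<alpha> = Min ((\<lambda>k. p k \<alpha>) ` {1..N}))"

definition indexing ::
  "nat \<Rightarrow> (nat \<Rightarrow> real) \<Rightarrow> (real \<Rightarrow> real) \<Rightarrow> real \<Rightarrow> nat" where
  "indexing M \<tau> h \<beta> = (LEAST k. 1 \<le> k \<and> k \<le> M \<and>
      (\<exists>\<alpha>. (\<forall>a. \<beta> * a - h a \<le> \<beta> * \<alpha> - h \<alpha>) \<and> in_piece M \<tau> k \<alpha>))"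

definition truncate ::
  "(real \<Rightarrow> real) \<Rightarrow> nat \<Rightarrow> (nat \<Rightarrow> real) \<Rightarrow> (nat \<Rightarrow> real \<Rightarrow> real) \<Rightarrow> nat \<Rightarrow> real \<Rightarrow> real" where
  "truncate g N \<tau> p k \<alpha> = (if k < N \<and> \<tau> k < \<alpha> then p k \<alpha> else g \<alpha>)"

definition semi_consistent ::
  "(real \<Rightarrow> real) \<Rightarrow> nat \<Rightarrow> (nat \<Rightarrow> real) \<Rightarrow> (nat \<Rightarrow> real \<Rightarrow> real) \<Rightarrow> bool" where
  "semi_consistent g N \<tau> p \<longleftrightarrow>
     piecewise_quadratic g N \<tau> p \<and>
     (\<forall>k\<in>{1..N}. strongly_convex (p k)) \<and>
     (\<forall>k. 2 \<le> k \<and> k \<le> N - 1 \<longrightarrow>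
        (\<forall>\<alpha>. \<tau> (k - 1) \<le> \<alpha> \<and> \<alpha> \<le> \<tau> k \<longrightarrow>
           p k \<alpha> \<le> min (p (k - 1) \<alpha>) (p (k + 1) \<alpha>))) \<and>
     (\<forall>k\<in>{1..N}. mono (indexing k \<tau> (truncate g N \<tau> p k)))"

end

theory Submission
  imports Defs
begin

lemma quad_pos:
  assumes "quadratic f" "strongly_convex f"
  shows "\<exists>A B C. A > 0 \<and> (\<forall>x. f x = A*x^2 + B*x + C)"
proof -
  obtain a b c where f: "\<forall>x. f x = a*x^2 + b*x + c" using assms(1) unfolding quadratic_def by blast
  obtain \<mu> where mu: "\<mu> > 0" and cv: "convex_on UNIV (\<lambda>x. f x - \<mu> / 2 * x^2)"
    using assms(2) unfolding strongly_convex_def by blast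
  have "(\<lambda>x. f x - \<mu> / 2 * x^2) ((1 - 1/2) *\<^sub>R (-1) + (1/2) *\<^sub>R 1)
      \<le> (1 - 1/2) * (\<lambda>x. f x - \<mu> / 2 * x^2) (-1) + (1/2) * (\<lambda>x. f x - \<mu> / 2 * x^2) 1"
    using convex_onD[OF cv, of "1/2" "-1" "1"] by simp
  then have h: "f 0 - 0 \<le> (1/2) * (f (-1) - \<mu>/2) + (1/2) * (f 1 - \<mu>/2)" by simp
  have "c \<le> 1/2*(a-b+c-\<mu>/2) + 1/2*(a+b+c-\<mu>/2)" using h f by simp
  then have "a - \<mu>/2 \<ge> 0" by (simp add: field_simps)
  then have "a > 0" using mu by linarith
  then show ?thesis using f by blast
qed

lemma clamp_max:
  fixes A B C \<beta> l u :: real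
  assumes "A > 0" "L \<or> U \<or> l \<le> u"
  shows "\<exists>c. (L \<or> l \<le> c) \<and> (U \<or> c \<le> u) \<and> (\<forall>x. (L \<or> l \<le> x) \<and> (U \<or> x \<le> u) \<longrightarrow>
     \<beta>*x - (A*x^2+B*x+C) \<le> \<beta>*c - (A*c^2+B*c+C))"
proof -
  define v where "v = (\<beta> - B) / (2*A)"
  have vA: "2 * A * v = \<beta> - B" using assms(1) unfolding v_def by simp
  have key: "\<beta>*x - (A*x^2+B*x+C) \<le> \<beta>*c - (A*c^2+B*c+C)" if "\<bar>c - v\<bar> \<le> \<bar>x - v\<bar>" for x c
  proof -
    have "(c - v)^2 \<le> (x - v)^2" using that abs_le_square_iff by blast
    then have "A * (c - v)^2 \<le> A * (x - v)^2" using assms(1) by simp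
    moreover have "(\<beta>*c - (A*c^2+B*c+C)) - (\<beta>*x - (A*x^2+B*x+C)) = A*(x-v)^2 - A*(c-v)^2"
    proof -
      have b: "\<beta> = 2 * A * v + B" using vA by simp
      show ?thesis unfolding b by (simp add: algebra_simps power2_eq_square)
    qed
    ultimately show ?thesis by linarith
  qed
  define q where "q x = \<beta>*x - (A*x^2+B*x+C)" for x
  have key': "q x \<le> q c" if "\<bar>c - v\<bar> \<le> \<bar>x - v\<bar>" for x c
    using key[OF that] unfolding q_def .
  have "\<exists>c. (L \<or> l \<le> c) \<and> (U \<or> c \<le> u) \<and> (\<forall>x. (L \<or> l \<le> x) \<and> (U \<or> x \<le> u) \<longrightarrow> q x \<le> q c)"
  proof (cases "\<not> L \<and> v < l")
    case True
    have "\<forall>x. (L \<or> l \<le> x) \<and> (U \<or> x \<le> u) \<longrightarrow> q x \<le> q l"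
    proof (intro allI impI)
      fix x assume "(L \<or> l \<le> x) \<and> (U \<or> x \<le> u)"
      then have "\<bar>l - v\<bar> \<le> \<bar>x - v\<bar>" using True by auto
      then show "q x \<le> q l" by (rule key')
    qed
    then show ?thesis using assms(2) True by blast
  next
    case F1: False
    show ?thesis
    proof (cases "\<not> U \<and> u < v")
      case True
      have "\<forall>x. (L \<or> l \<le> x) \<and> (U \<or> x \<le> u) \<longrightarrow> q x \<le> q u"
      proof (intro allI impI)
        fix x assume "(L \<or> l \<le> x) \<and> (U \<or> x \<le> u)"
        then have "\<bar>u - v\<bar> \<le> \<bar>x - v\<bar>" using True by auto
        then show "q x \<le> q u" by (rule key')
      qed
      then show ?thesis using assms(2) True by blast
    next
      case False
      have "\<forall>x. (L \<or> l \<le> x) \<and> (U \<or> x \<le> u) \<longrightarrow> q x \<le> q v"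
        using key' by simp
      moreover have "L \<or> l \<le> v" "U \<or> v \<le> u" using False F1 by auto
      ultimately show ?thesis by blast
    qed
  qed
  then show ?thesis unfolding q_def .
qed

lemma cover:
  assumes "k \<ge> (1::nat)"
  shows "\<exists>i. 1 \<le> i \<and> i \<le> k \<and> in_piece k \<tau> i a \<and> (\<forall>j. (j = k \<or> a \<le> \<tau> j) \<longrightarrow> 1 \<le> j \<longrightarrow> i \<le> j)"
proof -
  define P where "P i \<longleftrightarrow> 1 \<le> i \<and> (i = k \<or> a \<le> \<tau> i)" for i
  define i where "i = (LEAST i. P i)"
  have Pk: "P k" using assms unfolding P_def by simp
  have Pi: "P i" unfolding i_def by (rule LeastI[of P k, OF Pk])
  have ik: "i \<le> k" unfolding i_def by (rule Least_le[of P k, OF Pk])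
  have mn: "\<forall>j. (j = k \<or> a \<le> \<tau> j) \<longrightarrow> 1 \<le> j \<longrightarrow> i \<le> j"
  proof (intro allI impI)
    fix j assume "j = k \<or> a \<le> \<tau> j" "1 \<le> j"
    then have "P j" unfolding P_def by simp
    then show "i \<le> j" unfolding i_def by (rule Least_le)
  qed
  have i1: "1 \<le> i" and i2: "i = k \<or> a \<le> \<tau> i" using Pi unfolding P_def by auto
  have "i = 1 \<or> \<tau> (i - 1) \<le> a"
  proof (rule ccontr)
    assume a: "\<not> (i = 1 \<or> \<tau> (i - 1) \<le> a)"
    then have lt: "i - 1 < i" "1 \<le> i - 1" using i1 by auto
    have "\<not> P (i - 1)" using not_less_Least[of "i - 1" P] lt(1) unfolding i_def by blast
    moreover have "a \<le> \<tau> (i - 1)" using a by simp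
    ultimately show False using lt(2) unfolding P_def by blast
  qed
  then have "in_piece k \<tau> i a" using i2 unfolding in_piece_def by blast
  then show ?thesis using i1 ik mn by blast
qed

lemma exists_max:
  fixes h :: "real \<Rightarrow> real" and q :: "nat \<Rightarrow> real \<Rightarrow> real"
  assumes "k \<ge> 1"
    and hq: "\<forall>j\<in>{1..k}. \<forall>a. in_piece k \<tau> j a \<longrightarrow> h a = q j a"
    and qq: "\<forall>j\<in>{1..k}. \<exists>A B C. A > 0 \<and> (\<forall>x. q j x = A*x^2 + B*x + C)"
    and ord: "\<forall>j. 2 \<le> j \<and> j \<le> k - 1 \<longrightarrow> \<tau> (j - 1) \<le> \<tau> j"
  shows "\<exists>\<alpha>. \<forall>a. \<beta>*a - h a \<le> \<beta>*\<alpha> - h \<alpha>"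
proof -
  have "\<forall>j\<in>{1..k}. \<exists>c. in_piece k \<tau> j c \<and> (\<forall>x. in_piece k \<tau> j x \<longrightarrow> \<beta>*x - q j x \<le> \<beta>*c - q j c)"
  proof
    fix j assume j: "j \<in> {1..k}"
    obtain A B C where A: "A > 0" and q: "\<forall>x. q j x = A*x^2 + B*x + C" using qq j by blast
    have "j = 1 \<or> j = k \<or> \<tau> (j - 1) \<le> \<tau> j"
    proof (cases "j = 1 \<or> j = k")
      case False then have "2 \<le> j \<and> j \<le> k - 1" using j by auto
      then show ?thesis using ord by blast
    qed auto
    from clamp_max[OF A this, of \<beta> B C] obtain c where
      "(j = 1 \<or> \<tau> (j - 1) \<le> c) \<and> (j = k \<or> c \<le> \<tau> j) \<and> (\<forall>x. (j = 1 \<or> \<tau> (j - 1) \<le> x) \<and> (j = k \<or> x \<le> \<tau> j) \<longrightarrow>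
     \<beta>*x - (A*x^2+B*x+C) \<le> \<beta>*c - (A*c^2+B*c+C))" by blast
    then show "\<exists>c. in_piece k \<tau> j c \<and> (\<forall>x. in_piece k \<tau> j x \<longrightarrow> \<beta>*x - q j x \<le> \<beta>*c - q j c)"
      unfolding in_piece_def using q by metis
  qed
  then obtain c where c: "\<forall>j\<in>{1..k}. in_piece k \<tau> j (c j) \<and> (\<forall>x. in_piece k \<tau> j x \<longrightarrow> \<beta>*x - q j x \<le> \<beta>*c j - q j (c j))"
    by (metis bchoice)
  define val where "val j = \<beta> * c j - q j (c j)" for j
  have fin: "finite (val ` {1..k})" "val ` {1..k} \<noteq> {}" using assms(1) by auto
  obtain j0 where j0: "j0 \<in> {1..k}" "val j0 = Max (val ` {1..k})"
    using Max_in[OF fin] by auto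
  show ?thesis
  proof (intro exI allI)
    fix a
    obtain i where i: "1 \<le> i" "i \<le> k" "in_piece k \<tau> i a" using cover[OF assms(1)] by blast
    have "\<beta>*a - h a = \<beta>*a - q i a" using hq i by auto
    also have "\<dots> \<le> val i" using c i unfolding val_def by auto
    also have "\<dots> \<le> val j0" using j0 fin i by auto
    also have "\<dots> = \<beta> * c j0 - h (c j0)" using hq c j0 unfolding val_def by auto
    finally show "\<beta>*a - h a \<le> \<beta> * c j0 - h (c j0)" .
  qed
qed

lemma mono_index:
  fixes h :: "real \<Rightarrow> real"
  assumes "k \<ge> 1" and ex: "\<And>\<beta>. \<exists>\<alpha>. \<forall>a. \<beta>*a - h a \<le> \<beta>*\<alpha> - h \<alpha>"
  shows "mono (indexing k \<tau> h)"
proof (rule monoI)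
  fix b1 b2 :: real assume b: "b1 \<le> b2"
  show "indexing k \<tau> h b1 \<le> indexing k \<tau> h b2"
  proof (cases "b1 = b2")
    case True then show ?thesis by simp
  next
    case False
    then have blt: "b1 < b2" using b by simp
    define P where "P \<beta> j \<longleftrightarrow> 1 \<le> j \<and> j \<le> k \<and>
      (\<exists>\<alpha>. (\<forall>a. \<beta> * a - h a \<le> \<beta> * \<alpha> - h \<alpha>) \<and> in_piece k \<tau> j \<alpha>)" for \<beta> j
    have I: "indexing k \<tau> h \<beta> = (LEAST j. P \<beta> j)" for \<beta> unfolding indexing_def P_def by simp
    have exP: "\<exists>j. P \<beta> j" for \<beta>
    proof -
      obtain \<alpha> where "\<forall>a. \<beta>*a - h a \<le> \<beta>*\<alpha> - h \<alpha>" using ex by blast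
      moreover obtain i where "1 \<le> i" "i \<le> k" "in_piece k \<tau> i \<alpha>" using cover[OF assms(1)] by blast
      ultimately show ?thesis unfolding P_def by blast
    qed
    define j2 where "j2 = indexing k \<tau> h b2"
    have "P b2 j2" unfolding j2_def I using exP by (rule LeastI_ex)
    then obtain \<alpha>2 where a2: "\<forall>a. b2 * a - h a \<le> b2 * \<alpha>2 - h \<alpha>2" "in_piece k \<tau> j2 \<alpha>2"
      and j2: "1 \<le> j2" "j2 \<le> k" unfolding P_def by blast
    obtain \<alpha>1 where a1: "\<forall>a. b1*a - h a \<le> b1*\<alpha>1 - h \<alpha>1" using ex by blast
    have le: "\<alpha>1 \<le> \<alpha>2"
    proof (rule ccontr)
      assume "\<not> \<alpha>1 \<le> \<alpha>2"
      then have "(b2 - b1) * (\<alpha>1 - \<alpha>2) > 0" using blt by simp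
      moreover have "b1*\<alpha>2 - h \<alpha>2 \<le> b1*\<alpha>1 - h \<alpha>1" using a1 by blast
      moreover have "b2*\<alpha>1 - h \<alpha>1 \<le> b2*\<alpha>2 - h \<alpha>2" using a2 by blast
      ultimately show False by (simp add: algebra_simps)
    qed
    obtain i where i: "1 \<le> i" "i \<le> k" "in_piece k \<tau> i \<alpha>1"
      and mn: "\<forall>j. (j = k \<or> \<alpha>1 \<le> \<tau> j) \<longrightarrow> 1 \<le> j \<longrightarrow> i \<le> j" using cover[OF assms(1)] by blast
    have "j2 = k \<or> \<alpha>2 \<le> \<tau> j2" using a2(2) unfolding in_piece_def by blast
    then have "i \<le> j2" using mn le j2 by auto
    moreover have "P b1 i" unfolding P_def using i a1 by blast
    then have "indexing k \<tau> h b1 \<le> i" unfolding I by (rule Least_le)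
    ultimately show ?thesis unfolding j2_def by simp
  qed
qed

lemma tau_mono:
  fixes i m N :: nat
  assumes inc: "\<forall>k. 1 \<le> k \<and> k + 1 \<le> N - 1 \<longrightarrow> \<tau> k < \<tau> (k + 1)"
    and "1 \<le> i"
  shows "i \<le> m \<Longrightarrow> m \<le> N - 1 \<Longrightarrow> \<tau> i \<le> (\<tau> m :: real)"
proof (induction m)
  case 0 then show ?case by simp
next
  case (Suc n)
  show ?case
  proof (cases "i = Suc n")
    case False
    then have "i \<le> n" using Suc by simp
    then have "\<tau> i \<le> \<tau> n" using Suc by simp
    moreover have "\<tau> n < \<tau> (Suc n)" using inc assms(2) \<open>i \<le> n\<close> Suc.prems by auto
    ultimately show ?thesis by simp
  qed simp
qed

theorem lemma8:
  fixes g :: "real \<Rightarrow> real" and N :: nat and \<tau> :: "nat \<Rightarrow> real"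
    and p :: "nat \<Rightarrow> real \<Rightarrow> real"
  assumes "consistent g N \<tau> p"
  shows "semi_consistent g N \<tau> p"
proof -
  have pq: "piecewise_quadratic g N \<tau> p" and sc: "\<forall>k\<in>{1..N}. strongly_convex (p k)"
    and gm: "\<forall>\<alpha>. g \<alpha> = Min ((\<lambda>k. p k \<alpha>) ` {1..N})" using assms unfolding consistent_def by auto
  have N1: "N \<ge> 1" and inc: "\<forall>k. 1 \<le> k \<and> k + 1 \<le> N - 1 \<longrightarrow> \<tau> k < \<tau> (k + 1)"
    and quad: "\<forall>k\<in>{1..N}. quadratic (p k)"
    and gp: "\<forall>k\<in>{1..N}. \<forall>\<alpha>. in_piece N \<tau> k \<alpha> \<longrightarrow> g \<alpha> = p k \<alpha>"
    using pq unfolding piecewise_quadratic_def by auto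
  have gle: "g \<alpha> \<le> p j \<alpha>" if "j \<in> {1..N}" for j \<alpha>
    using gm that by (simp add: Min_le)
  have part2: "\<forall>k. 2 \<le> k \<and> k \<le> N - 1 \<longrightarrow>
        (\<forall>\<alpha>. \<tau> (k - 1) \<le> \<alpha> \<and> \<alpha> \<le> \<tau> k \<longrightarrow>
           p k \<alpha> \<le> min (p (k - 1) \<alpha>) (p (k + 1) \<alpha>))"
  proof (intro allI impI)
    fix k \<alpha> assume k: "2 \<le> k \<and> k \<le> N - 1" and a: "\<tau> (k - 1) \<le> \<alpha> \<and> \<alpha> \<le> \<tau> k"
    have "g \<alpha> = p k \<alpha>" using gp k a unfolding in_piece_def by auto
    moreover have "k - 1 \<in> {1..N}" using k by auto
    moreover have "g \<alpha> \<le> p (k - 1) \<alpha>" using gle \<open>k - 1 \<in> {1..N}\<close> by blast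
    moreover have "g \<alpha> \<le> p (k + 1) \<alpha>" using gle[of "k + 1"] k by auto
    ultimately show "p k \<alpha> \<le> min (p (k - 1) \<alpha>) (p (k + 1) \<alpha>)" by simp
  qed
  have part3: "\<forall>k\<in>{1..N}. mono (indexing k \<tau> (truncate g N \<tau> p k))"
  proof
    fix k assume k: "k \<in> {1..N}"
    define h where "h = truncate g N \<tau> p k"
    have hq: "\<forall>j\<in>{1..k}. \<forall>a. in_piece k \<tau> j a \<longrightarrow> h a = p j a"
    proof (intro ballI allI impI)
      fix j a assume j: "j \<in> {1..k}" and ip: "in_piece k \<tau> j a"
      show "h a = p j a"
      proof (cases "j = k")
        case True
        show ?thesis
        proof (cases "k < N \<and> \<tau> k < a")
          case True then show ?thesis using \<open>j = k\<close> unfolding h_def truncate_def by simp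
        next
          case False
          then have "in_piece N \<tau> k a" using ip \<open>j = k\<close> k unfolding in_piece_def by auto
          then show ?thesis using False gp k \<open>j = k\<close> unfolding h_def truncate_def by auto
        qed
      next
        case False
        then have jk: "j < k" using j by auto
        have aj: "a \<le> \<tau> j" using ip False unfolding in_piece_def by auto
        have "\<not> (k < N \<and> \<tau> k < a)"
        proof
          assume "k < N \<and> \<tau> k < a"
          moreover then have "\<tau> j \<le> \<tau> k" using tau_mono[OF inc, of j k] j jk by auto
          ultimately show False using aj by simp
        qed
        moreover have "in_piece N \<tau> j a" using ip jk k unfolding in_piece_def by auto
        ultimately show ?thesis using gp j k unfolding h_def truncate_def by auto
      qed
    qed
    have qq: "\<forall>j\<in>{1..k}. \<exists>A B C. A > 0 \<and> (\<forall>x. p j x = A*x^2 + B*x + C)"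
      using quad sc k quad_pos by auto
    have ord: "\<forall>j. 2 \<le> j \<and> j \<le> k - 1 \<longrightarrow> \<tau> (j - 1) \<le> \<tau> j"
    proof (intro allI impI)
      fix j assume "2 \<le> j \<and> j \<le> k - 1"
      then have "1 \<le> j - 1 \<and> j - 1 + 1 \<le> N - 1" using k by auto
      then have "\<tau> (j - 1) < \<tau> (j - 1 + 1)" using inc by blast
      then show "\<tau> (j - 1) \<le> \<tau> j" using \<open>2 \<le> j \<and> j \<le> k - 1\<close> by simp
    qed
    have k1: "k \<ge> 1" using k by auto
    have "mono (indexing k \<tau> h)"
      by (rule mono_index[OF k1 exists_max[OF k1 hq qq ord]])
    then show "mono (indexing k \<tau> (truncate g N \<tau> p k))" unfolding h_def .
  qed
  show ?thesis unfolding semi_consistent_def using pq sc part2 part3 by blast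
qed

end
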